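(* Let $X$ be a metric space with an $(n-1)$-dimensional control function $D_X^{n-1}:\mathbb{R}_+\to\mathbb{R}_+\cup\{\infty\}$, where $n\ge1$. Let $r>0$ and let $f:\{0,1,\ldots,k\}^n\to X$ be an $r$-cube. Then there exist an index $i$ and two points $a,b\in\{0,1,\ldots,k\}^n$ whose $i$-th coordinates differ by $k$ such that $\mathrm{dist}(f(a),f(b))\le D_X^{n-1}(n\cdot r)$.
   Context: An $r$-cube in a metric space $X$ is a function $f:\{0,1,\ldots,k\}^n\to X$ such that $\mathrm{dist}(f(x),f(x+e_i))<r$ whenever $x,x+e_i\in\{0,\ldots,k\}^n$, $e_i$ the standard basis vectors of $\mathbb{R}^n$. For $Y\subseteq X$, $r$-components of $Y$ are the equivalence classes of points joined by sequences in $Y$ with consecutive distances $<r$. An $m$-dimensional control function of $X$ is $D:\mathbb{R}_+\to\mathbb{R}_+\cup\{\infty\}$ such that for each $r>0$ there is a cover $\{X_0,\dots,X_m\}$ of $X$ such that every open ball $B(x,r)$ lies in some $X_i$ and every $r$-component of each $X_i$ has diameter at most $D(r)$. *)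

theory Defs
  imports "HOL-Analysis.Analysis"
begin

definition grid :: "nat \<Rightarrow> nat \<Rightarrow> (nat \<Rightarrow> nat) set" where
  "grid k n = {x. (\<forall>i<n. x i \<le> k) \<and> (\<forall>i\<ge>n. x i = 0)}"

definition r_cube :: "real \<Rightarrow> nat \<Rightarrow> nat \<Rightarrow> ((nat \<Rightarrow> nat) \<Rightarrow> 'a::metric_space) \<Rightarrow> bool" where
  "r_cube r k n f \<longleftrightarrow>
     (\<forall>x i. x \<in> grid k n \<and> i < n \<and> x i + 1 \<le> k \<longrightarrow> dist (f x) (f (x(i := x i + 1))) < r)"

definition r_chain :: "real \<Rightarrow> 'a::metric_space set \<Rightarrow> 'a \<Rightarrow> 'a \<Rightarrow> bool" where
  "r_chain r Y = (\<lambda>u v. u \<in> Y \<and> v \<in> Y \<and> dist u v < r)\<^sup>*\<^sup>*"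

definition r_components :: "real \<Rightarrow> 'a::metric_space set \<Rightarrow> 'a set set" where
  "r_components r Y = {{y \<in> Y. r_chain r Y x y} | x. x \<in> Y}"

definition ediam :: "'a::metric_space set \<Rightarrow> ereal" where
  "ediam C = (SUP x\<in>C. SUP y\<in>C. ereal (dist x y))"

text \<open>m-dimensional control function of the metric space (the whole type 'a).\<close>
definition control_function :: "nat \<Rightarrow> (real \<Rightarrow> ereal) \<Rightarrow> 'a::metric_space itself \<Rightarrow> bool" where
  "control_function m D _ \<longleftrightarrow>
     (\<forall>r>0. D r \<ge> 0) \<and>
     (\<forall>r>0. \<exists>U :: nat \<Rightarrow> 'a set.
         (\<Union>i\<le>m. U i) = UNIV \<and>
         (\<forall>x. \<exists>i\<le>m. ball x r \<subseteq> U i) \<and>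
         (\<forall>i\<le>m. \<forall>C \<in> r_components r (U i). ediam C \<le> D r))"

end

theory Submission
  imports Defs
begin
definition kadj :: "nat \<Rightarrow> (nat \<Rightarrow> nat) \<Rightarrow> (nat \<Rightarrow> nat) \<Rightarrow> bool" where
  "kadj n x y \<longleftrightarrow> (\<forall>t<n. x t \<le> y t + 1 \<and> y t \<le> x t + 1)"

lemma hex:
  fixes col :: "(nat \<Rightarrow> nat) \<Rightarrow> nat" and n k :: nat
  assumes colr: "\<And>x. col x < n"
  shows "\<exists>i<n. \<exists>a b. a \<in> grid k n \<and> b \<in> grid k n \<and> a i = 0 \<and> b i = k \<and> col a = i \<and>
     (\<lambda>x y. x \<in> grid k n \<and> y \<in> grid k n \<and> col x = i \<and> col y = i \<and> kadj n x y)\<^sup>*\<^sup>* a b"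
proof (rule ccontr)
  define E where "E i = (\<lambda>x y. x \<in> grid k n \<and> y \<in> grid k n \<and> col x = i \<and> col y = i \<and> kadj n x y)" for i
  assume "\<not> ?thesis"
  hence nc: "\<And>i a b. i < n \<Longrightarrow> a \<in> grid k n \<Longrightarrow> b \<in> grid k n \<Longrightarrow> a i = 0 \<Longrightarrow> col a = i \<Longrightarrow> (E i)\<^sup>*\<^sup>* a b \<Longrightarrow> b i \<noteq> k"
    unfolding E_def by blast
  define A where "A i = {y. y \<in> grid k n \<and> col y = i \<and> (\<exists>x. x \<in> grid k n \<and> x i = 0 \<and> col x = i \<and> (E i)\<^sup>*\<^sup>* x y)}" for i
  have Alt: "a i < k" if "a \<in> A i" "i < n" for a i
  proof -
    from that obtain x where x: "x \<in> grid k n" "x i = 0" "col x = i" "(E i)\<^sup>*\<^sup>* x a" "a \<in> grid k n"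
      unfolding A_def by blast
    have "a i \<noteq> k" using nc[OF \<open>i<n\<close> x(1) x(5) x(2) x(3) x(4)] .
    moreover have "a i \<le> k" using x(5) \<open>i<n\<close> unfolding grid_def by auto
    ultimately show ?thesis by simp
  qed
  define \<rho> where "\<rho> x = (\<lambda>i. if i < n then x i else 0)" for x :: "nat \<Rightarrow> nat"
  define Z where "Z j x \<longleftrightarrow> x j = 0 \<or> (\<exists>a\<in>A j. kadj n x a)" for j x
  define lab where "lab x j = (if Z j x then 0 else (1::nat))" for x j
  define p where "p = Suc k"
  have "odd (card {s. ksimplex p n s \<and> (reduced n \<circ> lab) ` s = {..n}})"
  proof (rule kuhn_combinatorial)
    show "0 < p" by (simp add: p_def)
    show "\<forall>x j. (\<forall>j. x j \<le> p) \<and> j < n \<and> x j = 0 \<longrightarrow> lab x j = 0"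
      by (auto simp: lab_def Z_def)
    show "\<forall>x j. (\<forall>j. x j \<le> p) \<and> j < n \<and> x j = p \<longrightarrow> lab x j = 1"
    proof (intro allI impI)
      fix x j assume h: "(\<forall>j. x j \<le> p) \<and> j < n \<and> x j = p"
      have "\<not> Z j x"
      proof
        assume "Z j x"
        then obtain a where "a \<in> A j" "kadj n x a" using h by (auto simp: Z_def p_def)
        with Alt[of a j] h show False by (auto simp: kadj_def p_def)
      qed
      thus "lab x j = 1" by (simp add: lab_def)
    qed
  qed
  hence "{s. ksimplex p n s \<and> (reduced n \<circ> lab) ` s = {..n}} \<noteq> {}"
    by (rule odd_card_imp_not_empty)
  then obtain s b u where ks: "kuhn_simplex p n b u s" and rl: "(reduced n \<circ> lab) ` s = {..n}"
    by (auto elim: ksimplex.cases)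
  have adj: "kadj n v w" if "v \<in> s" "w \<in> s" for v w
    using kuhn_simplex.base_le[OF ks that(1)] kuhn_simplex.le_Suc_base[OF ks that(1)]
      kuhn_simplex.base_le[OF ks that(2)] kuhn_simplex.le_Suc_base[OF ks that(2)]
    unfolding kadj_def by (metis Suc_eq_plus1 le_trans nat_le_linear add_le_mono1)
  have sle: "v j \<le> p" if "v \<in> s" for v j
    using kuhn_simplex.s_le_p[OF ks that] .
  obtain w where w: "w \<in> s" "reduced n (lab w) = n"
    using rl by (metis atMost_iff comp_apply imageE order_refl)
  have wZ: "Z i w" if "i < n" for i
    using reduced_labelling(2)[of n "lab w"] w(2) that by (auto simp: lab_def split: if_splits)
  have vc: "\<exists>v\<in>s. \<not> Z c v" if "c < n" for c
  proof -
    obtain v where v: "v \<in> s" "reduced n (lab v) = c"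
      using rl \<open>c<n\<close> by (metis atMost_iff comp_apply imageE less_imp_le)
    have "lab v c \<noteq> 0" using reduced_labelling(3)[of n "lab v"] v(2) \<open>c<n\<close> by auto
    thus ?thesis using v by (auto simp: lab_def split: if_splits)
  qed
  show False
  proof (cases "\<forall>i<n. w i \<le> k")
    case True
    have wg: "\<rho> w \<in> grid k n" using True by (auto simp: grid_def \<rho>_def)
    define c where "c = col (\<rho> w)"
    have cn: "c < n" using colr by (simp add: c_def)
    have adjr: "kadj n x (\<rho> w) \<longleftrightarrow> kadj n x w" for x by (simp add: kadj_def \<rho>_def)
    have "\<rho> w \<in> A c"
    proof -
      have "Z c w" using wZ[OF cn] .
      then consider "w c = 0" | a where "a \<in> A c" "kadj n w a" unfolding Z_def by auto
      then show ?thesis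
      proof cases
        case 1
        then have "\<rho> w c = 0" using cn by (simp add: \<rho>_def)
        then show ?thesis using wg unfolding A_def c_def by blast
      next
        case 2
        then obtain x where x: "x \<in> grid k n" "x c = 0" "col x = c" "(E c)\<^sup>*\<^sup>* x a" "a \<in> grid k n" "col a = c"
          unfolding A_def by blast
        have "kadj n a (\<rho> w)" using 2(2) adjr unfolding kadj_def by (auto simp: \<rho>_def)
        hence "E c a (\<rho> w)" using x wg by (simp add: E_def c_def)
        hence "(E c)\<^sup>*\<^sup>* x (\<rho> w)" using x(4) by simp
        then show ?thesis using wg x unfolding A_def c_def by blast
      qed
    qed
    moreover obtain v where "v \<in> s" "\<not> Z c v" using vc[OF cn] by blast
    moreover have "kadj n v (\<rho> w)" using adj[OF \<open>v\<in>s\<close> w(1)] adjr by simp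
    ultimately show False unfolding Z_def by blast
  next
    case False
    then obtain m where m: "m < n" "w m > k" by auto
    have "Z m w" using wZ[OF m(1)] .
    then obtain a where "a \<in> A m" "kadj n w a" using m by (auto simp: Z_def)
    with Alt[of a m] m show False by (auto simp: kadj_def)
  qed
qed

lemma kadj_dist:
  fixes f :: "(nat \<Rightarrow> nat) \<Rightarrow> 'a::metric_space"
  assumes cube: "r_cube r k n f" and r: "r > 0" and n: "n \<ge> 1"
    and x: "x \<in> grid k n" and y: "y \<in> grid k n" and xy: "kadj n x y"
  shows "dist (f x) (f y) < real n * r"
proof -
  define z where "z m = (\<lambda>j. if j < m then y j else x j)" for m
  have zg: "z m \<in> grid k n" for m using x y by (auto simp: grid_def z_def)
  have step: "dist (f (z m)) (f (z (Suc m))) < r" if "m < n" for m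
  proof -
    have zs: "z (Suc m) = (z m)(m := y m)" by (auto simp: z_def)
    consider "y m = x m" | "y m = x m + 1" | "x m = y m + 1" using xy \<open>m<n\<close> unfolding kadj_def by fastforce
    then show ?thesis
    proof cases
      case 1
      then have "z (Suc m) = z m" using zs by (auto simp: z_def)
      then show ?thesis using r by simp
    next
      case 2
      have "z m m + 1 \<le> k" using 2 y \<open>m<n\<close> by (auto simp: grid_def z_def)
      then have "dist (f (z m)) (f ((z m)(m := z m m + 1))) < r"
        using cube zg \<open>m<n\<close> unfolding r_cube_def by blast
      moreover have "(z m)(m := z m m + 1) = z (Suc m)" using 2 zs by (auto simp: z_def)
      ultimately show ?thesis by simp
    next
      case 3
      have "z (Suc m) m + 1 \<le> k" using 3 x \<open>m<n\<close> by (auto simp: grid_def z_def)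
      then have "dist (f (z (Suc m))) (f ((z (Suc m))(m := z (Suc m) m + 1))) < r"
        using cube zg \<open>m<n\<close> unfolding r_cube_def by blast
      moreover have "(z (Suc m))(m := z (Suc m) m + 1) = z m" using 3 by (auto simp: z_def)
      ultimately show ?thesis by (simp add: dist_commute)
    qed
  qed
  have claim: "m \<le> n \<Longrightarrow> 1 \<le> m \<Longrightarrow> dist (f x) (f (z m)) < real m * r" for m
  proof (induction m)
    case 0 then show ?case by simp
  next
    case (Suc m)
    show ?case
    proof (cases "m = 0")
      case True
      have "z 0 = x" by (auto simp: z_def)
      then show ?thesis using step[of 0] Suc True by simp
    next
      case False
      then have "dist (f x) (f (z m)) < real m * r" using Suc by simp
      moreover have "dist (f (z m)) (f (z (Suc m))) < r" using step Suc by simp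
      ultimately have "dist (f x) (f (z (Suc m))) < real m * r + r"
        using dist_triangle[of "f x" "f (z (Suc m))" "f (z m)"] by linarith
      then show ?thesis by (simp add: algebra_simps)
    qed
  qed
  have "z n = y" using x y by (auto simp: z_def grid_def)
  then show ?thesis using claim[of n] n by simp
qed

theorem corollary2p3:
  fixes D :: "real \<Rightarrow> ereal" and f :: "(nat \<Rightarrow> nat) \<Rightarrow> 'a::metric_space"
    and n k :: nat and r :: real
  assumes "n \<ge> 1"
    and "control_function (n - 1) D TYPE('a)"
    and "r > 0"
    and "r_cube r k n f"
  shows "\<exists>i<n. \<exists>a\<in>grid k n. \<exists>b\<in>grid k n.
           a i = 0 \<and> b i = k \<and> ereal (dist (f a) (f b)) \<le> D (real n * r)"
proof -
  define R where "R = real n * r"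
  have R: "R > 0" using assms(1,3) by (simp add: R_def)
  obtain U :: "nat \<Rightarrow> 'a set" where
    U2: "\<And>x. \<exists>i\<le>n - 1. ball x R \<subseteq> U i" and
    U3: "\<And>i C. i \<le> n - 1 \<Longrightarrow> C \<in> r_components R (U i) \<Longrightarrow> ediam C \<le> D R"
    using assms(2) R unfolding control_function_def by metis
  define col where "col x = (SOME i. i < n \<and> ball (f x) R \<subseteq> U i)" for x
  have colp: "col x < n \<and> ball (f x) R \<subseteq> U (col x)" for x
  proof -
    obtain i where "i \<le> n - 1" "ball (f x) R \<subseteq> U i" using U2 by blast
    then have "i < n \<and> ball (f x) R \<subseteq> U i" using assms(1) by simp
    then show ?thesis unfolding col_def by (rule someI)
  qed
  have inU: "f x \<in> U (col x)" for x using colp[of x] R by auto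
  obtain i a b where i: "i < n" and ab: "a \<in> grid k n" "b \<in> grid k n" "a i = 0" "b i = k" "col a = i"
    and ch: "(\<lambda>x y. x \<in> grid k n \<and> y \<in> grid k n \<and> col x = i \<and> col y = i \<and> kadj n x y)\<^sup>*\<^sup>* a b"
    using hex[of col n k] colp by blast
  have "r_chain R (U i) (f a) (f b) \<and> col b = i"
    using ch
  proof (induction rule: rtranclp_induct)
    case base
    then show ?case using ab by (simp add: r_chain_def)
  next
    case (step y z)
    have "dist (f y) (f z) < R"
      using kadj_dist[OF assms(4) assms(3) assms(1)] step(2) by (simp add: R_def)
    moreover have "f y \<in> U i" "f z \<in> U i" using inU step(2) by metis+
    ultimately have "(\<lambda>u v. u \<in> U i \<and> v \<in> U i \<and> dist u v < R) (f y) (f z)" by simp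
    moreover have "r_chain R (U i) (f a) (f y)" using step(3) by simp
    ultimately have "r_chain R (U i) (f a) (f z)" unfolding r_chain_def
      by (rule rtranclp.rtrancl_into_rtrancl[rotated])
    then show ?case using step(2) by simp
  qed
  then have rc: "r_chain R (U i) (f a) (f b)" and cb: "col b = i" by simp_all
  define C where "C = {y \<in> U i. r_chain R (U i) (f a) y}"
  have fa: "f a \<in> U i" using inU ab(5) by metis
  have "C \<in> r_components R (U i)" unfolding r_components_def C_def using fa by blast
  moreover have "i \<le> n - 1" using i by simp
  ultimately have "ediam C \<le> D R" using U3 by blast
  moreover have "f a \<in> C" using fa by (simp add: C_def r_chain_def)
  moreover have "f b \<in> C" using rc inU[of b] cb unfolding C_def by simp
  ultimately have "ereal (dist (f a) (f b)) \<le> D R"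
    unfolding ediam_def by (meson SUP_upper2 order_refl order_trans)
  then show ?thesis using i ab R_def by blast
qed

end
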